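(* Let $G$ be a multigraph without self-loops whose vertex set is partitioned into three disjoint sets $\{s,t\}$, $\mathcal A$, $\mathcal B$ (with $s\ne t$) such that: the subgraph induced by $\mathcal A\cup\mathcal B$ is connected; each of $s,t$ has at least one incident edge connecting to $\mathcal A$, and each vertex of $\mathcal A$ has at least one incident edge connecting to $\{s,t\}$; and each vertex of $\mathcal B$ has at least 2 distinct neighbors in $\mathcal A$. Then $G$ admits an $(s,t)$-bipolar orientation.
   Context: $G$ admits an $(s,t)$-bipolar orientation if its edges can be directed so that there are no directed cycles, $s$ is the unique source (vertex with no incoming edges), and $t$ is the unique sink (vertex with no outgoing edges). *)

theory Defs
  imports Main
begin

text \<open>A finite multigraph is given by a vertex set V, an edge set E (edges are
abstract objects, so parallel edges are allowed) and an endpoint map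
ends :: edge => (vertex, vertex). The pair order of ends e is arbitrary;
the graph is undirected.\<close>

definition multigraph_no_loops :: "'v set \<Rightarrow> 'e set \<Rightarrow> ('e \<Rightarrow> 'v \<times> 'v) \<Rightarrow> bool" where
  "multigraph_no_loops V E ends \<longleftrightarrow> finite V \<and> finite E \<and>
     (\<forall>e\<in>E. fst (ends e) \<in> V \<and> snd (ends e) \<in> V \<and> fst (ends e) \<noteq> snd (ends e))"

definition adjacent :: "'e set \<Rightarrow> ('e \<Rightarrow> 'v \<times> 'v) \<Rightarrow> 'v \<Rightarrow> 'v \<Rightarrow> bool" where
  "adjacent E ends u v \<longleftrightarrow> (\<exists>e\<in>E. ends e = (u, v) \<or> ends e = (v, u))"

definition induced_connected :: "'e set \<Rightarrow> ('e \<Rightarrow> 'v \<times> 'v) \<Rightarrow> 'v set \<Rightarrow> bool" where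
  "induced_connected E ends S \<longleftrightarrow>
     (\<forall>x\<in>S. \<forall>y\<in>S. (x, y) \<in> ({(u, v). u \<in> S \<and> v \<in> S \<and> adjacent E ends u v})\<^sup>*)"

definition is_orientation :: "'e set \<Rightarrow> ('e \<Rightarrow> 'v \<times> 'v) \<Rightarrow> ('e \<Rightarrow> 'v \<times> 'v) \<Rightarrow> bool" where
  "is_orientation E ends ori \<longleftrightarrow> (\<forall>e\<in>E. ori e = ends e \<or> ori e = prod.swap (ends e))"

definition arcs :: "'e set \<Rightarrow> ('e \<Rightarrow> 'v \<times> 'v) \<Rightarrow> ('v \<times> 'v) set" where
  "arcs E ori = ori ` E"

definition is_source :: "'v set \<Rightarrow> 'e set \<Rightarrow> ('e \<Rightarrow> 'v \<times> 'v) \<Rightarrow> 'v \<Rightarrow> bool" where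
  "is_source V E ori v \<longleftrightarrow> v \<in> V \<and> (\<forall>e\<in>E. snd (ori e) \<noteq> v)"

definition is_sink :: "'v set \<Rightarrow> 'e set \<Rightarrow> ('e \<Rightarrow> 'v \<times> 'v) \<Rightarrow> 'v \<Rightarrow> bool" where
  "is_sink V E ori v \<longleftrightarrow> v \<in> V \<and> (\<forall>e\<in>E. fst (ori e) \<noteq> v)"

definition bipolar_orientation ::
  "'v set \<Rightarrow> 'e set \<Rightarrow> ('e \<Rightarrow> 'v \<times> 'v) \<Rightarrow> 'v \<Rightarrow> 'v \<Rightarrow> ('e \<Rightarrow> 'v \<times> 'v) \<Rightarrow> bool" where
  "bipolar_orientation V E ends s t ori \<longleftrightarrow>
     is_orientation E ends ori \<and> acyclic (arcs E ori) \<and>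
     (\<forall>v\<in>V. is_source V E ori v \<longleftrightarrow> v = s) \<and>
     (\<forall>v\<in>V. is_sink V E ori v \<longleftrightarrow> v = t)"

definition admits_bipolar_orientation ::
  "'v set \<Rightarrow> 'e set \<Rightarrow> ('e \<Rightarrow> 'v \<times> 'v) \<Rightarrow> 'v \<Rightarrow> 'v \<Rightarrow> bool" where
  "admits_bipolar_orientation V E ends s t \<longleftrightarrow> (\<exists>ori. bipolar_orientation V E ends s t ori)"

end

theory Submission
  imports Defs Complex_Main
begin

locale bp =
  fixes V :: "'v set" and E :: "'e set" and ends :: "'e \<Rightarrow> 'v \<times> 'v" and s t :: 'v
  assumes mg: "multigraph_no_loops V E ends" and st: "s \<noteq> t" and sV: "s \<in> V" and tV: "t \<in> V"
  and F: "\<And>x v. x \<in> V \<Longrightarrow> v \<in> V \<Longrightarrow> v \<notin> {s,t,x} \<Longrightarrow>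
      \<exists>r\<in>{s,t}-{x}. (v,r) \<in> {(a,b). a \<noteq> x \<and> b \<noteq> x \<and> adjacent E ends a b}\<^sup>*"
  and sN: "\<exists>u. adjacent E ends s u" and tN: "\<exists>u. adjacent E ends t u"
begin

abbreviation adj where "adj \<equiv> adjacent E ends"

lemma adj_sym: "adj a b \<Longrightarrow> adj b a" unfolding adjacent_def by auto

lemma adj_V: "adj a b \<Longrightarrow> a \<in> V \<and> b \<in> V \<and> a \<noteq> b"
  using mg unfolding adjacent_def multigraph_no_loops_def by force

lemma finV: "finite V" using mg unfolding multigraph_no_loops_def by auto

definition W :: "'v set \<Rightarrow> ('v\<times>'v) set" where
  "W X = {(a,b). a \<notin> X \<and> b \<notin> X \<and> adj a b}"

lemma W_sym: assumes "(a,b) \<in> (W X)\<^sup>*" shows "(b,a) \<in> (W X)\<^sup>*"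
proof -
  have c: "(W X)\<inverse> = W X" using adj_sym by (auto simp: W_def)
  have "(b,a) \<in> ((W X)\<inverse>)\<^sup>*" using rtrancl_converseI[OF assms] .
  thus ?thesis using c by simp
qed

definition both :: "'v set \<Rightarrow> ('v \<Rightarrow> real) \<Rightarrow> 'v \<Rightarrow> bool" where
  "both X f v \<longleftrightarrow> (\<exists>u\<in>X. adj u v \<and> f u < f v) \<and> (\<exists>w\<in>X. adj v w \<and> f v < f w)"

definition ginv :: "'v set \<Rightarrow> ('v \<Rightarrow> real) \<Rightarrow> bool" where
  "ginv X f \<longleftrightarrow> s \<in> X \<and> t \<in> X \<and> X \<subseteq> V \<and> inj_on f X \<and> (\<forall>v\<in>X. f s \<le> f v \<and> f v \<le> f t)
     \<and> (\<forall>v\<in>X-{s,t}. both X f v)"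

definition pb :: "'v set \<Rightarrow> ('v \<Rightarrow> real) \<Rightarrow> 'v \<Rightarrow> 'v \<Rightarrow> bool" where
  "pb X f x y \<longleftrightarrow> s \<in> X \<and> t \<in> X \<and> X \<subseteq> V \<and> inj_on f X \<and> (\<forall>v\<in>X. f s \<le> f v \<and> f v \<le> f t)
     \<and> (\<forall>v\<in>X-{s,t,x}. both X f v) \<and> x \<in> X \<and> (x \<notin> {s,t} \<longrightarrow> (\<exists>u\<in>X. adj u x \<and> f u < f x))
     \<and> y \<in> X \<and> f x < f y"

lemma both_mono: assumes "both X f v" "v \<in> X" "\<forall>w\<in>X. g w = f w"
  shows "both (insert z X) g v"
  using assms unfolding both_def by (metis insertI2)

lemma step:
  assumes pbX: "pb X f x y" and zV: "z \<in> V" and zX: "z \<notin> X" and xz: "adj x z"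
  defines "m \<equiv> Min {f w | w. w \<in> X \<and> f x < f w}"
  defines "g \<equiv> f(z := (f x + m)/2)"
  shows "pb (insert z X) g z y \<and> (adj z y \<longrightarrow> ginv (insert z X) g)"
proof -
  note P = pbX[unfolded pb_def]
  have finX: "finite X" using P finV finite_subset by blast
  let ?M = "{f w | w. w \<in> X \<and> f x < f w}"
  have finM: "finite ?M" using finX by simp
  have yM: "f y \<in> ?M" using P by blast
  have mM: "m \<in> ?M" unfolding m_def using finM yM Min_in by blast
  have mgt: "f x < m" using mM by auto
  have mle: "m \<le> f y" unfolding m_def using finM yM by (simp add: Min_le)
  have gz: "g z = (f x + m)/2" unfolding g_def by simp
  have gz1: "f x < g z" "g z < m" "g z < f y" using gz mgt mle by auto
  have gX: "\<forall>w\<in>X. g w = f w" using zX unfolding g_def by auto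
  have nov: "\<forall>w\<in>X. f w \<noteq> g z"
  proof
    fix w assume w: "w \<in> X"
    show "f w \<noteq> g z"
    proof
      assume e: "f w = g z"
      hence "f w \<in> ?M" using w gz1 by (metis (mono_tags, lifting) mem_Collect_eq)
      hence "m \<le> f w" unfolding m_def using finM by (simp add: Min_le)
      thus False using e gz1 by simp
    qed
  qed
  have injg: "inj_on g (insert z X)"
  proof -
    have "inj_on g X" using P gX inj_on_cong by metis
    moreover have "g z \<notin> g ` (X - {z})" using nov gX by auto
    ultimately show ?thesis by simp
  qed
  have xX: "x \<in> X" and yX: "y \<in> X" using P by auto
  have bnd: "\<forall>v\<in>insert z X. g s \<le> g v \<and> g v \<le> g t"
    using P gX gz1 xX yX by (metis insert_iff less_eq_real_def order.strict_trans1 order.strict_trans2)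
  have old: "\<forall>v\<in>insert z X - {s,t,z}. both (insert z X) g v"
  proof
    fix v assume v: "v \<in> insert z X - {s,t,z}"
    hence vX: "v \<in> X" by auto
    show "both (insert z X) g v"
    proof (cases "v = x")
      case True
      then obtain u where "u \<in> X" "adj u x" "f u < f x" using P v by auto
      thus ?thesis unfolding both_def using True xz gX gz1 vX by (metis insertCI)
    next
      case False
      hence "both X f v" using P v by auto
      thus ?thesis using both_mono vX gX by blast
    qed
  qed
  have zst: "z \<notin> {s,t}" using zX P by auto
  have zearly: "\<exists>u\<in>insert z X. adj u z \<and> g u < g z" using xz xX gX gz1 by auto
  have pb1: "pb (insert z X) g z y"
    unfolding pb_def using P injg bnd old zst zearly gX gz1 yX zV by auto
  moreover have "adj z y \<longrightarrow> ginv (insert z X) g"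
  proof
    assume zy: "adj z y"
    have "both (insert z X) g z" unfolding both_def using zearly zy yX gX gz1 by auto
    thus "ginv (insert z X) g" unfolding ginv_def using P injg bnd old zV by auto
  qed
  ultimately show ?thesis by blast
qed


lemma goodl:
  assumes "(a,w) \<in> (W X)\<^sup>*" "w \<notin> X" "adj w y"
  shows "(adj z y \<or> (\<exists>z' w'. z' \<notin> insert z X \<and> w' \<notin> insert z X \<and> adj z z'
            \<and> (z',w') \<in> (W (insert z X))\<^sup>* \<and> adj w' y))
         \<or> (a \<noteq> z \<and> (\<exists>w'. (a,w') \<in> (W (insert z X))\<^sup>* \<and> w' \<notin> insert z X \<and> adj w' y))"
  using assms(1)
proof (induction rule: converse_rtrancl_induct)
  case base
  then show ?case using assms(2,3) by auto
next
  case (step a b)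
  show ?case
  proof (cases "adj z y \<or> (\<exists>z' w'. z' \<notin> insert z X \<and> w' \<notin> insert z X \<and> adj z z'
            \<and> (z',w') \<in> (W (insert z X))\<^sup>* \<and> adj w' y)")
    case True thus ?thesis by blast
  next
    case False
    with step.IH obtain w' where bz: "b \<noteq> z" and w': "(b,w') \<in> (W (insert z X))\<^sup>*"
      "w' \<notin> insert z X" "adj w' y" by blast
    have ab: "a \<notin> X" "b \<notin> X" "adj a b" using step.hyps(1) unfolding W_def by auto
    show ?thesis
    proof (cases "a = z")
      case True
      thus ?thesis using ab bz w' by blast
    next
      case False
      hence "(a,b) \<in> W (insert z X)" using ab bz unfolding W_def by auto
      hence "(a,w') \<in> (W (insert z X))\<^sup>*" using w'(1) converse_rtrancl_into_rtrancl by metis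
      thus ?thesis using False w' by blast
    qed
  qed
qed

lemma pend:
  assumes "pb X f x y" "z \<notin> X" "w \<notin> X" "adj x z" "(z,w) \<in> (W X)\<^sup>*" "adj w y"
  shows "\<exists>X' g. X \<subset> X' \<and> ginv X' g"
  using assms
proof (induction "card (V - X)" arbitrary: X f x z w rule: less_induct)
  case less
  have zV: "z \<in> V" using adj_V less.prems(4) by blast
  define m where "m = Min {f w | w. w \<in> X \<and> f x < f w}"
  define g where "g = f(z := (f x + m)/2)"
  have S: "pb (insert z X) g z y \<and> (adj z y \<longrightarrow> ginv (insert z X) g)"
    unfolding g_def m_def by (rule step[OF less.prems(1) zV less.prems(2) less.prems(4)])
  have XX: "X \<subset> insert z X" using less.prems(2) by auto
  have G: "adj z y \<or> (\<exists>z' w'. z' \<notin> insert z X \<and> w' \<notin> insert z X \<and> adj z z'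
            \<and> (z',w') \<in> (W (insert z X))\<^sup>* \<and> adj w' y)"
    using goodl[OF less.prems(5) less.prems(3) less.prems(6), of z] by simp
  show ?case
  proof (cases "adj z y")
    case True thus ?thesis using S XX by blast
  next
    case False
    then obtain z' w' where zw: "z' \<notin> insert z X" "w' \<notin> insert z X" "adj z z'"
       "(z',w') \<in> (W (insert z X))\<^sup>*" "adj w' y" using G by blast
    have XV: "X \<subseteq> V" using less.prems(1) unfolding pb_def by auto
    have "card (V - insert z X) < card (V - X)"
    proof -
      have "V - insert z X = (V - X) - {z}" by blast
      moreover have "z \<in> V - X" using zV less.prems(2) by blast
      ultimately show ?thesis using finV card_Diff1_less[of "V - X" z] by simp
    qed
    then obtain X' g' where "insert z X \<subset> X'" "ginv X' g'"
      using less.hyps[OF _ S[THEN conjunct1] zw(1,2,3,4,5)] by blast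
    thus ?thesis using XX by blast
  qed
qed

lemma reach:
  assumes "s \<in> X" "t \<in> X" "X \<subseteq> V" "x \<in> X" "v \<in> V" "v \<notin> X"
  shows "\<exists>y\<in>X-{x}. \<exists>w. w \<notin> X \<and> (v,w) \<in> (W X)\<^sup>* \<and> adj w y"
proof -
  let ?R = "{(a,b). a \<noteq> x \<and> b \<noteq> x \<and> adjacent E ends a b}"
  have "v \<notin> {s,t,x}" using assms by auto
  then obtain r where r: "r \<in> {s,t}-{x}" "(v,r) \<in> ?R\<^sup>*" using F assms by blast
  have claim: "(v,r') \<in> ?R\<^sup>* \<Longrightarrow> (\<exists>y\<in>X-{x}. \<exists>w. w \<notin> X \<and> (v,w) \<in> (W X)\<^sup>* \<and> adj w y)
      \<or> (r' \<notin> X \<and> (v,r') \<in> (W X)\<^sup>*)" for r'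
  proof (induction rule: rtrancl_induct)
    case base thus ?case using assms by auto
  next
    case (step b c)
    show ?case
    proof (cases "\<exists>y\<in>X-{x}. \<exists>w. w \<notin> X \<and> (v,w) \<in> (W X)\<^sup>* \<and> adj w y")
      case True thus ?thesis by blast
    next
      case False
      hence b: "b \<notin> X" "(v,b) \<in> (W X)\<^sup>*" using step.IH by auto
      have bc: "c \<noteq> x" "adj b c" using step.hyps(2) by auto
      show ?thesis
      proof (cases "c \<in> X")
        case True thus ?thesis using b bc by blast
      next
        case False
        hence "(b,c) \<in> W X" using b bc unfolding W_def by auto
        thus ?thesis using b False by (meson rtrancl.rtrancl_into_rtrancl)
      qed
    qed
  qed
  have "r \<in> X" using r assms by auto
  thus ?thesis using claim[OF r(2)] by blast
qed

lemma ear: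
  assumes "s \<in> X" "t \<in> X" "X \<subseteq> V" "v \<in> V" "v \<notin> X"
  shows "\<exists>x y z w. x \<in> X \<and> y \<in> X \<and> x \<noteq> y \<and> z \<notin> X \<and> w \<notin> X \<and> adj x z
           \<and> (z,w) \<in> (W X)\<^sup>* \<and> adj w y"
proof -
  obtain y1 w1 where 1: "y1 \<in> X-{s}" "w1 \<notin> X" "(v,w1) \<in> (W X)\<^sup>*" "adj w1 y1"
    using reach[OF assms(1,2,3,1,4,5)] by blast
  obtain y2 w2 where 2: "y2 \<in> X-{y1}" "w2 \<notin> X" "(v,w2) \<in> (W X)\<^sup>*" "adj w2 y2"
    using reach[OF assms(1,2,3) _ assms(4,5), of y1] 1 by blast
  have "(w1,w2) \<in> (W X)\<^sup>*" using W_sym[OF 1(3)] 2(3) by (meson rtrancl_trans)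
  moreover have "adj y1 w1" using 1 adj_sym by blast
  ultimately show ?thesis using 1 2 by blast
qed

lemma mainloop:
  assumes "ginv X f" shows "\<exists>g. ginv V g"
  using assms
proof (induction "card (V - X)" arbitrary: X f rule: less_induct)
  case less
  note G = less.prems[unfolded ginv_def]
  show ?case
  proof (cases "X = V")
    case True thus ?thesis using less.prems by blast
  next
    case False
    then obtain v where v: "v \<in> V" "v \<notin> X" using G by blast
    obtain x y z w where e: "x \<in> X" "y \<in> X" "x \<noteq> y" "z \<notin> X" "w \<notin> X" "adj x z"
           "(z,w) \<in> (W X)\<^sup>*" "adj w y" using ear[OF _ _ _ v] G by blast
    have pbi: "pb X f a b" if "a \<in> X" "b \<in> X" "f a < f b" for a b
      using G that unfolding pb_def both_def by auto
    have "f x \<noteq> f y" using G e inj_on_def by metis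
    hence "\<exists>X' g. X \<subset> X' \<and> ginv X' g"
    proof (cases "f x < f y")
      case True
      show ?thesis using pend[OF pbi[OF e(1,2) True] e(4,5,6,7,8)] .
    next
      case False
      hence lt: "f y < f x" using \<open>f x \<noteq> f y\<close> by simp
      show ?thesis using pend[OF pbi[OF e(2,1) lt] e(5,4) adj_sym[OF e(8)] W_sym[OF e(7)] adj_sym[OF e(6)]] .
    qed
    then obtain X' g where X': "X \<subset> X'" "ginv X' g" by blast
    have "X' \<subseteq> V" using X' unfolding ginv_def by auto
    hence "V - X' \<subset> V - X" using X' by blast
    hence "card (V - X') < card (V - X)"
      using finV by (simp add: psubset_card_mono)
    thus ?thesis using less.hyps X' by blast
  qed
qed


lemma start: "ginv {s,t} (\<lambda>v. if v = s then 0 else 1)"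
  unfolding ginv_def using st sV tV by auto

theorem bipolar: "admits_bipolar_orientation V E ends s t"
proof -
  obtain f where G: "ginv V f" using mainloop[OF start] by blast
  note G' = G[unfolded ginv_def]
  define ori where "ori e = (if f (fst (ends e)) < f (snd (ends e)) then ends e else prod.swap (ends e))" for e
  have orient: "is_orientation E ends ori" unfolding is_orientation_def ori_def by auto
  have endsV: "fst (ends e) \<in> V \<and> snd (ends e) \<in> V \<and> fst (ends e) \<noteq> snd (ends e)" if "e \<in> E" for e
    using mg that unfolding multigraph_no_loops_def by auto
  have arc_lt: "f (fst (ori e)) < f (snd (ori e))" if "e \<in> E" for e
  proof -
    have "f (fst (ends e)) \<noteq> f (snd (ends e))" using endsV[OF that] G' inj_on_def by metis
    thus ?thesis unfolding ori_def by (auto simp: prod.swap_def)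
  qed
  have oriV: "fst (ori e) \<in> V \<and> snd (ori e) \<in> V" if "e \<in> E" for e
    using endsV[OF that] unfolding ori_def by (auto simp: prod.swap_def)
  have sub: "arcs E ori \<subseteq> {(a,b). f a < f b}" unfolding arcs_def
  proof
    fix p assume "p \<in> ori ` E"
    then obtain e where "e \<in> E" "p = ori e" by blast
    thus "p \<in> {(a,b). f a < f b}" using arc_lt[OF \<open>e \<in> E\<close>] by (cases "ori e") auto
  qed
  have "{(a,b). f a < f b}\<^sup>+ \<subseteq> {(a,b::'v). f a < f b}"
  proof
    fix p assume "p \<in> {(a,b). f a < f b}\<^sup>+"
    then obtain a b where p: "p = (a,b)" "(a,b) \<in> {(a,b). f a < f b}\<^sup>+" by (cases p) auto
    from p(2) have "f a < f b" by (induction rule: trancl_induct) auto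
    thus "p \<in> {(a,b). f a < f b}" using p by simp
  qed
  hence acy0: "acyclic {(a,b::'v). f a < f b}" unfolding acyclic_def by blast
  have acy: "acyclic (arcs E ori)" using acyclic_subset[OF acy0 sub] .
  have arc_of: "\<exists>e\<in>E. ori e = (u,v)" if uv: "adj u v" "f u < f v" for u v
  proof -
    obtain e where e: "e \<in> E" "ends e = (u,v) \<or> ends e = (v,u)" using uv(1) unfolding adjacent_def by blast
    have "ori e = (u,v)" using e uv(2) unfolding ori_def by (auto simp: prod.swap_def)
    thus ?thesis using e(1) by blast
  qed
  have sless: "f s < f v" if "v \<in> V" "v \<noteq> s" for v
    using G' that inj_on_def by (metis order_le_neq_trans)
  have tless: "f v < f t" if "v \<in> V" "v \<noteq> t" for v
    using G' that inj_on_def by (metis order_le_neq_trans)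
  have src: "is_source V E ori v \<longleftrightarrow> v = s" if vV: "v \<in> V" for v
  proof
    assume "v = s"
    moreover have "\<forall>e\<in>E. snd (ori e) \<noteq> s"
    proof
      fix e assume e: "e \<in> E"
      show "snd (ori e) \<noteq> s"
      proof
        assume "snd (ori e) = s"
        hence "f (fst (ori e)) < f s" using arc_lt[OF e] by simp
        moreover have "f s \<le> f (fst (ori e))" using G' oriV[OF e] by blast
        ultimately show False by simp
      qed
    qed
    ultimately show "is_source V E ori v" unfolding is_source_def using vV by simp
  next
    assume so: "is_source V E ori v"
    show "v = s"
    proof (rule ccontr)
      assume vs: "v \<noteq> s"
      have "\<exists>u. adj u v \<and> f u < f v"
      proof (cases "v = t")
        case True
        obtain u where "adj t u" using tN by blast
        hence "adj u t" "u \<in> V" "u \<noteq> t" using adj_sym adj_V by blast+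
        thus ?thesis using tless True by blast
      next
        case False
        thus ?thesis using G' vV vs unfolding both_def by blast
      qed
      then obtain u where "adj u v" "f u < f v" by blast
      then obtain e where "e \<in> E" "ori e = (u,v)" using arc_of by blast
      thus False using so unfolding is_source_def by force
    qed
  qed
  have snk: "is_sink V E ori v \<longleftrightarrow> v = t" if vV: "v \<in> V" for v
  proof
    assume "v = t"
    moreover have "\<forall>e\<in>E. fst (ori e) \<noteq> t"
    proof
      fix e assume e: "e \<in> E"
      show "fst (ori e) \<noteq> t"
      proof
        assume "fst (ori e) = t"
        hence "f t < f (snd (ori e))" using arc_lt[OF e] by simp
        moreover have "f (snd (ori e)) \<le> f t" using G' oriV[OF e] by blast
        ultimately show False by simp
      qed
    qed
    ultimately show "is_sink V E ori v" unfolding is_sink_def using vV by simp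
  next
    assume so: "is_sink V E ori v"
    show "v = t"
    proof (rule ccontr)
      assume vt: "v \<noteq> t"
      have "\<exists>w. adj v w \<and> f v < f w"
      proof (cases "v = s")
        case True
        obtain u where "adj s u" using sN by blast
        hence "u \<in> V" "u \<noteq> s" using adj_V by blast+
        thus ?thesis using sless True \<open>adj s u\<close> by blast
      next
        case False
        thus ?thesis using G' vV vt unfolding both_def by blast
      qed
      then obtain w where "adj v w" "f v < f w" by blast
      then obtain e where "e \<in> E" "ori e = (v,w)" using arc_of by blast
      thus False using so unfolding is_sink_def by force
    qed
  qed
  show ?thesis unfolding admits_bipolar_orientation_def bipolar_orientation_def
    using orient acy src snk by blast
qed

end

theorem lemma5p5:
  fixes V :: "'v set" and E :: "'e set" and ends :: "'e \<Rightarrow> 'v \<times> 'v"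
    and s t :: 'v and A B :: "'v set"
  assumes "multigraph_no_loops V E ends"
    and "s \<noteq> t"
    and "V = {s, t} \<union> A \<union> B"
    and "{s, t} \<inter> A = {}" and "{s, t} \<inter> B = {}" and "A \<inter> B = {}"
    and "induced_connected E ends (A \<union> B)"
    and "\<exists>a\<in>A. adjacent E ends s a"
    and "\<exists>a\<in>A. adjacent E ends t a"
    and "\<forall>a\<in>A. adjacent E ends a s \<or> adjacent E ends a t"
    and "\<forall>b\<in>B. card {a\<in>A. adjacent E ends b a} \<ge> 2"
  shows "admits_bipolar_orientation V E ends s t"
proof -
  have sym: "adjacent E ends a b \<Longrightarrow> adjacent E ends b a" for a b
    unfolding adjacent_def by auto
  have F: "\<exists>r\<in>{s,t}-{x}. (v,r) \<in> {(a,b). a \<noteq> x \<and> b \<noteq> x \<and> adjacent E ends a b}\<^sup>*"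
    if xV: "x \<in> V" and vV: "v \<in> V" and vn: "v \<notin> {s,t,x}" for x v
  proof -
    let ?R = "{(a,b). a \<noteq> x \<and> b \<noteq> x \<and> adjacent E ends a b}"
    have vD: "v \<in> A \<union> B" using vV vn assms(3) by auto
    show ?thesis
    proof (cases "x = s \<or> x = t")
      case True
      then obtain r where rr: "r \<in> {s,t}" "r \<noteq> x" "x \<in> {s,t}" using assms(2) by blast
      obtain a where a: "a \<in> A" "adjacent E ends r a"
        using assms(8,9) rr(1) by (cases "r = s") auto
      have "(v,a) \<in> {(u, w). u \<in> A \<union> B \<and> w \<in> A \<union> B \<and> adjacent E ends u w}\<^sup>*"
        using assms(7) vD a(1) unfolding induced_connected_def by blast
      moreover have "{(u, w). u \<in> A \<union> B \<and> w \<in> A \<union> B \<and> adjacent E ends u w} \<subseteq> ?R"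
        using rr assms(4,5) by auto
      ultimately have "(v,a) \<in> ?R\<^sup>*" using rtrancl_mono by blast
      moreover have "(a,r) \<in> ?R" using a rr assms(4) sym by auto
      ultimately have "(v,r) \<in> ?R\<^sup>*" by (meson rtrancl.rtrancl_into_rtrancl)
      moreover have "r \<in> {s,t}-{x}" using rr by auto
      ultimately show ?thesis by blast
    next
      case False
      show ?thesis
      proof (cases "v \<in> A")
        case True
        then obtain r where "r \<in> {s,t}" "adjacent E ends v r" using assms(10) by blast
        hence "(v,r) \<in> ?R" "r \<in> {s,t}-{x}" using False vn by auto
        thus ?thesis by blast
      next
        case vA: False
        hence vB: "v \<in> B" using vD by blast
        let ?S = "{a\<in>A. adjacent E ends v a}"
        have "\<exists>a\<in>?S. a \<noteq> x"
        proof (rule ccontr)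
          assume "\<not> ?thesis"
          hence "?S \<subseteq> {x}" by blast
          hence "card ?S \<le> 1" using card_mono[of "{x}" ?S] by simp
          thus False using assms(11) vB by fastforce
        qed
        then obtain a where a: "a \<in> A" "adjacent E ends v a" "a \<noteq> x" by blast
        then obtain r where r: "r \<in> {s,t}" "adjacent E ends a r" using assms(10) by blast
        have "(v,a) \<in> ?R" "(a,r) \<in> ?R" "r \<in> {s,t}-{x}" using a r False vn by auto
        thus ?thesis by (meson converse_rtrancl_into_rtrancl r_into_rtrancl)
      qed
    qed
  qed
  interpret bp V E ends s t
  proof
    show "multigraph_no_loops V E ends" by (rule assms(1))
    show "s \<noteq> t" by (rule assms(2))
    show "s \<in> V" "t \<in> V" using assms(3) by auto
    show "\<And>x v. x \<in> V \<Longrightarrow> v \<in> V \<Longrightarrow> v \<notin> {s, t, x} \<Longrightarrow>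
      \<exists>r\<in>{s, t} - {x}. (v, r) \<in> {(a, b). a \<noteq> x \<and> b \<noteq> x \<and> adjacent E ends a b}\<^sup>*" by (rule F)
    show "\<exists>u. adjacent E ends s u" "\<exists>u. adjacent E ends t u" using assms(8,9) by auto
  qed
  show ?thesis by (rule bipolar)
qed

end
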